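(* Let $\rho\in(0,1)$ and $\sigma_x<\sigma_y$. Let $r>0$ and $\theta\in[\theta_M,\frac{5\pi}{4}]$, and let $\mathbf a=(x_1,y_1)=(x_2^*+r\cos\theta,\,x_2^*+r\sin\theta)$. If $\mathbf a\neq\mathbf a^*$ and $x_1^2+y_1^2>2x_2^{*2}$, then $K(\mathbf a,\mathbf b^* )>0$.
   Context: Standing setup. Fix $\sigma_x,\sigma_y>0$ and $\rho\in(-1,1)$, and let $(\xi,\eta)$ be a bivariate normal random vector with mean $(0,0)$ and covariance matrix $\Sigma=\begin{pmatrix}\sigma_x^2&\rho\sigma_x\sigma_y\\ \rho\sigma_x\sigma_y&\sigma_y^2\end{pmatrix}$. Player I (the minimizer) chooses $\mathbf a=(x_1,y_1)\in\mathbb R^2$ and Player II (the maximizer) chooses $\mathbf b=(x_2,y_2)\in\mathbb R^2$. Let $C_1(\mathbf a,\mathbf b)=\{(x,y):(x_1-x)^2+(y_1-y)^2<(x_2-x)^2+(y_2-y)^2\}$ and $C_2(\mathbf a,\mathbf b)=\{(x,y):(x_1-x)^2+(y_1-y)^2>(x_2-x)^2+(y_2-y)^2\}$. The payoff to Player II (paid by Player I) is $K(\mathbf a,\mathbf b)=x_1+y_1$ if $\mathbf a=\mathbf b$, and $K(\mathbf a,\mathbf b)=(x_1+y_1)\,P((\xi,\eta)\in C_1(\mathbf a,\mathbf b))+(x_2+y_2)\,P((\xi,\eta)\in C_2(\mathbf a,\mathbf b))$ if $\mathbf a\neq\mathbf b$. For $\mathbf a=(x,y)$ write $-\mathbf a=(-x,-y)$.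 Let $x_2^*=\frac{\sqrt{2\pi(\sigma_x^2+2\rho\sigma_x\sigma_y+\sigma_y^2)}}{4}$, $\mathbf b^*=(x_2^*,x_2^* )$ and $\mathbf a^*=(-x_2^*,-x_2^* )$. With $c=\frac{\sigma_y^2-\sigma_x^2}{2\rho\sigma_x\sigma_y}$, $\theta_M$ denotes the unique angle in $(\pi/2,\pi)$ with $\tan\theta_M=c-\sqrt{c^2+1}$. *)

theory Defs
  imports "HOL-Analysis.Analysis"
begin

definition bvn_density :: "real \<Rightarrow> real \<Rightarrow> real \<Rightarrow> real \<times> real \<Rightarrow> real" where
  "bvn_density sx sy rho p =
     (let x = fst p; y = snd p in
      exp (- (x\<^sup>2 / sx\<^sup>2 - 2 * rho * x * y / (sx * sy) + y\<^sup>2 / sy\<^sup>2) / (2 * (1 - rho\<^sup>2)))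
      / (2 * pi * sx * sy * sqrt (1 - rho\<^sup>2)))"

definition bvn :: "real \<Rightarrow> real \<Rightarrow> real \<Rightarrow> (real \<times> real) measure" where
  "bvn sx sy rho = density lborel (\<lambda>p. ennreal (bvn_density sx sy rho p))"

definition C1 :: "real \<times> real \<Rightarrow> real \<times> real \<Rightarrow> (real \<times> real) set" where
  "C1 a b = {(x, y). (fst a - x)\<^sup>2 + (snd a - y)\<^sup>2 < (fst b - x)\<^sup>2 + (snd b - y)\<^sup>2}"

definition C2 :: "real \<times> real \<Rightarrow> real \<times> real \<Rightarrow> (real \<times> real) set" where
  "C2 a b = {(x, y). (fst a - x)\<^sup>2 + (snd a - y)\<^sup>2 > (fst b - x)\<^sup>2 + (snd b - y)\<^sup>2}"

text \<open>Payoff to Player II.\<close>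
definition K :: "real \<Rightarrow> real \<Rightarrow> real \<Rightarrow> real \<times> real \<Rightarrow> real \<times> real \<Rightarrow> real" where
  "K sx sy rho a b =
     (if a = b then fst a + snd a
      else (fst a + snd a) * measure (bvn sx sy rho) (C1 a b)
         + (fst b + snd b) * measure (bvn sx sy rho) (C2 a b))"

definition x2star :: "real \<Rightarrow> real \<Rightarrow> real \<Rightarrow> real" where
  "x2star sx sy rho = sqrt (2 * pi * (sx\<^sup>2 + 2 * rho * sx * sy + sy\<^sup>2)) / 4"

definition bstar :: "real \<Rightarrow> real \<Rightarrow> real \<Rightarrow> real \<times> real" where
  "bstar sx sy rho = (x2star sx sy rho, x2star sx sy rho)"

definition astar :: "real \<Rightarrow> real \<Rightarrow> real \<Rightarrow> real \<times> real" where
  "astar sx sy rho = (- x2star sx sy rho, - x2star sx sy rho)"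

definition cpar :: "real \<Rightarrow> real \<Rightarrow> real \<Rightarrow> real" where
  "cpar sx sy rho = (sy\<^sup>2 - sx\<^sup>2) / (2 * rho * sx * sy)"

definition thetaM :: "real \<Rightarrow> real \<Rightarrow> real \<Rightarrow> real" where
  "thetaM sx sy rho = (THE t. pi / 2 < t \<and> t < pi \<and>
      tan t = cpar sx sy rho - sqrt ((cpar sx sy rho)\<^sup>2 + 1))"

end

theory Submission
  imports Defs "HOL-Probability.Probability" "HOL-Real_Asymp.Real_Asymp"
begin

abbreviation "N \<equiv> normal_density 0"

lemma N_scale:
  assumes "a \<noteq> 0" "s > 0"
  shows "\<bar>a\<bar> * N (\<bar>a\<bar> * s) (a * x) = N s x"
  using assms by (simp add: normal_density_def real_sqrt_mult power_mult_distrib field_simps)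

lemma N_total: "s > 0 \<Longrightarrow> (\<integral>\<^sup>+x. ennreal (N s x) \<partial>lborel) = 1"
  by (subst nn_integral_eq_integral) auto

lemma sub1:
  fixes g :: "real \<Rightarrow> real"
  assumes a: "a \<noteq> 0" and s: "s > 0" and g[measurable]: "g \<in> borel_measurable borel" and gn: "\<And>x. g x \<ge> 0"
  shows "(\<integral>\<^sup>+x. ennreal (N s x * g (a*x)) \<partial>lborel) = (\<integral>\<^sup>+z. ennreal (N (\<bar>a\<bar> * s) z * g z) \<partial>lborel)"
proof -
  have "(\<integral>\<^sup>+z. ennreal (N (\<bar>a\<bar> * s) z * g z) \<partial>lborel)
      = \<bar>a\<bar> * (\<integral>\<^sup>+x. ennreal (N (\<bar>a\<bar> * s) (0 + a*x) * g (0 + a*x)) \<partial>lborel)"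
    by (rule nn_integral_real_affine) (use a in auto)
  also have "\<dots> = (\<integral>\<^sup>+x. ennreal \<bar>a\<bar> * ennreal (N (\<bar>a\<bar> * s) (a*x) * g (a*x)) \<partial>lborel)"
    by (subst nn_integral_cmult) auto
  also have "\<dots> = (\<integral>\<^sup>+x. ennreal (N s x * g (a*x)) \<partial>lborel)"
    apply (rule nn_integral_cong)
    apply (subst ennreal_mult[symmetric])
    using gn N_scale[OF a s] by (auto simp: mult.assoc[symmetric])
  finally show ?thesis ..
qed

lemma sub_shift:
  fixes f :: "real \<Rightarrow> real"
  assumes [measurable]: "f \<in> borel_measurable borel"
  shows "(\<integral>\<^sup>+z. ennreal (f z) \<partial>lborel) = (\<integral>\<^sup>+t. ennreal (f (y + t)) \<partial>lborel)"
  using nn_integral_real_affine[of "\<lambda>z. ennreal (f z)" 1 y] by simp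


lemma twoD:
  assumes s: "s > 0" and t: "t > 0" and a: "a \<noteq> 0" and b: "b \<noteq> 0"
  shows "(\<integral>\<^sup>+x. \<integral>\<^sup>+w. ennreal (N s x * N t w * indicator {e<..} (a*x+b*w)) \<partial>lborel \<partial>lborel)
       = (\<integral>\<^sup>+z. ennreal (N (sqrt (a\<^sup>2* s\<^sup>2+b\<^sup>2* t\<^sup>2)) z * indicator {e<..} z) \<partial>lborel)"
proof -
  define s1 where "s1 = \<bar>a\<bar> * s"
  define t1 where "t1 = \<bar>b\<bar> * t"
  have s1: "s1 > 0" and t1: "t1 > 0" using s t a b by (auto simp: s1_def t1_def)
  have S: "sqrt (a\<^sup>2* s\<^sup>2+b\<^sup>2* t\<^sup>2) = sqrt (s1\<^sup>2 + t1\<^sup>2)"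
    by (simp add: s1_def t1_def power_mult_distrib)
  let ?I = "indicator {e<..} :: real \<Rightarrow> real"
  have "(\<integral>\<^sup>+z. ennreal (N (sqrt (a\<^sup>2* s\<^sup>2+b\<^sup>2* t\<^sup>2)) z * ?I z) \<partial>lborel)
      = (\<integral>\<^sup>+z. ennreal (N (sqrt (s1\<^sup>2 + t1\<^sup>2)) z) * ennreal (?I z) \<partial>lborel)"
    by (simp add: S ennreal_mult)
  also have "\<dots> = (\<integral>\<^sup>+z. (\<integral>\<^sup>+y. ennreal (N s1 (z - y) * N t1 y) \<partial>lborel) * ennreal (?I z) \<partial>lborel)"
    using fun_cong[OF conv_normal_density_zero_mean[OF s1 t1]] by simp
  also have "\<dots> = (\<integral>\<^sup>+z. \<integral>\<^sup>+y. ennreal (N s1 (z - y) * N t1 y * ?I z) \<partial>lborel \<partial>lborel)"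
    by (subst nn_integral_multc[symmetric]) (auto simp: ennreal_mult)
  also have "\<dots> = (\<integral>\<^sup>+y. \<integral>\<^sup>+z. ennreal (N s1 (z - y) * N t1 y * ?I z) \<partial>lborel \<partial>lborel)"
    by (rule lborel_pair.Fubini') measurable
  also have "\<dots> = (\<integral>\<^sup>+y. \<integral>\<^sup>+u. ennreal (N s1 u * (N t1 y * ?I (y + u))) \<partial>lborel \<partial>lborel)"
    apply (rule nn_integral_cong)
    subgoal for y
    apply (subst sub_shift[where y=y])
     apply measurable
    apply (simp add: ac_simps)
    done
    done
  also have "\<dots> = (\<integral>\<^sup>+y. \<integral>\<^sup>+x. ennreal (N s x * (N t1 y * ?I (y + a*x))) \<partial>lborel \<partial>lborel)"
    apply (rule nn_integral_cong)
    subgoal for y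
    apply (subst sub1[OF a s, where g="\<lambda>u. N t1 y * ?I (y + u)", folded s1_def, symmetric])
    by (measurable; simp)+
    done
  also have "\<dots> = (\<integral>\<^sup>+x. \<integral>\<^sup>+y. ennreal (N s x * (N t1 y * ?I (y + a*x))) \<partial>lborel \<partial>lborel)"
    by (rule lborel_pair.Fubini') measurable
  also have "\<dots> = (\<integral>\<^sup>+x. \<integral>\<^sup>+y. ennreal (N t1 y * (N s x * ?I (y + a*x))) \<partial>lborel \<partial>lborel)"
    by (simp add: ac_simps)
  also have "\<dots> = (\<integral>\<^sup>+x. \<integral>\<^sup>+w. ennreal (N t w * (N s x * ?I (b*w + a*x))) \<partial>lborel \<partial>lborel)"
    apply (rule nn_integral_cong)
    subgoal for x
    apply (subst sub1[OF b t, where g="\<lambda>u. N s x * ?I (u + a*x)", folded t1_def, symmetric])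
    by (measurable; simp)+
    done
  also have "\<dots> = (\<integral>\<^sup>+x. \<integral>\<^sup>+w. ennreal (N s x * N t w * ?I (a*x+b*w)) \<partial>lborel \<partial>lborel)"
    by (simp add: ac_simps)
  finally show ?thesis ..
qed


lemma twoD_gen:
  assumes s: "s > 0" and t: "t > 0" and ab: "a \<noteq> 0 \<or> b \<noteq> 0"
  shows "(\<integral>\<^sup>+x. \<integral>\<^sup>+w. ennreal (N s x * N t w * indicator {e<..} (a*x+b*w)) \<partial>lborel \<partial>lborel)
       = (\<integral>\<^sup>+z. ennreal (N (sqrt (a\<^sup>2 * s\<^sup>2+b\<^sup>2 * t\<^sup>2)) z * indicator {e<..} z) \<partial>lborel)"
proof (cases "a \<noteq> 0 \<and> b \<noteq> 0")
  case True then show ?thesis using twoD[OF s t] by blast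
next
  case False
  let ?I = "indicator {e<..} :: real \<Rightarrow> real"
  show ?thesis
  proof (cases "b = 0")
    case True
    with ab have a: "a \<noteq> 0" by auto
    have "(\<integral>\<^sup>+x. \<integral>\<^sup>+w. ennreal (N s x * N t w * ?I (a*x+b*w)) \<partial>lborel \<partial>lborel)
        = (\<integral>\<^sup>+x. ennreal (N s x * ?I (a*x)) * (\<integral>\<^sup>+w. ennreal (N t w) \<partial>lborel) \<partial>lborel)"
      apply (rule nn_integral_cong)
      apply (subst nn_integral_cmult[symmetric])
      by (auto simp: True ennreal_mult[symmetric] ac_simps intro!: nn_integral_cong)
    also have "\<dots> = (\<integral>\<^sup>+x. ennreal (N s x * ?I (a*x)) \<partial>lborel)"
      using N_total[OF t] by simp
    also have "\<dots> = (\<integral>\<^sup>+z. ennreal (N (\<bar>a\<bar> * s) z * ?I z) \<partial>lborel)"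
      by (rule sub1[OF a s]) auto
    also have "\<bar>a\<bar> * s = sqrt (a\<^sup>2 * s\<^sup>2+b\<^sup>2 * t\<^sup>2)"
      using s by (simp add: True real_sqrt_mult)
    finally show ?thesis .
  next
    case False
    with \<open>\<not> (a \<noteq> 0 \<and> b \<noteq> 0)\<close> have a: "a = 0" and b: "b \<noteq> 0" by auto
    define C where "C = (\<integral>\<^sup>+w. ennreal (N t w * ?I (b*w)) \<partial>lborel)"
    have "(\<integral>\<^sup>+x. \<integral>\<^sup>+w. ennreal (N s x * N t w * ?I (a*x+b*w)) \<partial>lborel \<partial>lborel)
        = (\<integral>\<^sup>+x. ennreal (N s x) * C \<partial>lborel)"
      unfolding C_def
      apply (rule nn_integral_cong)
      apply (subst nn_integral_cmult[symmetric])
      by (auto simp: a ennreal_mult[symmetric] ac_simps intro!: nn_integral_cong)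
    also have "\<dots> = C"
      using N_total[OF s] by (simp add: nn_integral_multc)
    also have "C = (\<integral>\<^sup>+z. ennreal (N (\<bar>b\<bar> * t) z * ?I z) \<partial>lborel)"
      unfolding C_def by (rule sub1[OF b t]) auto
    also have "\<bar>b\<bar> * t = sqrt (a\<^sup>2 * s\<^sup>2+b\<^sup>2 * t\<^sup>2)"
      using t by (simp add: a real_sqrt_mult)
    finally show ?thesis .
  qed
qed

lemma bvn_factor:
  assumes sx: "sx > 0" and sy: "sy > 0" and r: "\<bar>rho\<bar> < 1"
  shows "bvn_density sx sy rho (x, y) = N sx x * N (sy * sqrt (1 - rho\<^sup>2)) (y - rho * sy / sx * x)"
proof -
  have r2: "1 - rho\<^sup>2 > 0" using r by (simp add: abs_square_less_1)
  have t2: "(sy * sqrt (1 - rho\<^sup>2))\<^sup>2 = sy\<^sup>2 * (1 - rho\<^sup>2)"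
    using r2 by (simp add: power_mult_distrib)
  have c: "sqrt (2 * pi * sx\<^sup>2) * sqrt (2 * pi * (sy\<^sup>2 * (1 - rho\<^sup>2))) = 2 * pi * sx * sy * sqrt (1 - rho\<^sup>2)"
  proof -
    have "sqrt (2 * pi * sx\<^sup>2) = sqrt (2*pi) * sx" using sx by (simp add: real_sqrt_mult)
    moreover have "sqrt (2 * pi * (sy\<^sup>2 * (1 - rho\<^sup>2))) = sqrt (2*pi) * sy * sqrt (1 - rho\<^sup>2)"
      using sy by (simp add: real_sqrt_mult)
    ultimately show ?thesis by simp
  qed
  have e: "- (x\<^sup>2 / sx\<^sup>2 - 2 * rho * x * y / (sx * sy) + y\<^sup>2 / sy\<^sup>2) / (2 * (1 - rho\<^sup>2))
     = - (x - 0)\<^sup>2 / (2 * sx\<^sup>2) + - (y - rho * sy / sx * x - 0)\<^sup>2 / (2 * (sy\<^sup>2 * (1 - rho\<^sup>2)))"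
  proof -
    have "(y - rho * sy / sx * x)\<^sup>2 = (sx * y - rho * sy * x)\<^sup>2 / sx\<^sup>2"
      using sx by (simp add: power_divide[symmetric] diff_divide_distrib)
    then show ?thesis
      using sx sy r2 apply simp
      apply (simp add: divide_simps)
      apply (simp add: power2_eq_square algebra_simps)
      done
  qed
  show ?thesis
    unfolding bvn_density_def normal_density_def Let_def fst_conv snd_conv t2
    apply (subst e)
    apply (simp only: exp_add)
    using c by simp
qed


lemma bvn_half:
  assumes sx: "sx > 0" and sy: "sy > 0" and r: "\<bar>rho\<bar> < 1" and d: "d1 \<noteq> 0 \<or> d2 \<noteq> 0"
  shows "emeasure (bvn sx sy rho) {p. e < d1 * fst p + d2 * snd p}
     = (\<integral>\<^sup>+z. ennreal (N (sqrt (d1\<^sup>2 * sx\<^sup>2 + 2 * rho * d1 * d2 * sx * sy + d2\<^sup>2 * sy\<^sup>2)) z * indicator {e<..} z) \<partial>lborel)"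
proof -
  let ?I = "indicator {e<..} :: real \<Rightarrow> real"
  define t where "t = sy * sqrt (1 - rho\<^sup>2)"
  define k where "k = rho * sy / sx"
  have r2: "1 - rho\<^sup>2 > 0" using r by (simp add: abs_square_less_1)
  have t: "t > 0" using sy r2 by (simp add: t_def)
  have [measurable]: "bvn_density sx sy rho \<in> borel_measurable borel"
    unfolding bvn_density_def Let_def
    by (intro borel_measurable_continuous_onI continuous_intros) (use sx sy r2 in auto)
  have [measurable]: "(\<lambda>p. d1 * fst p + d2 * snd p :: real) \<in> borel_measurable borel"
    by (intro borel_measurable_continuous_onI continuous_intros)
  have "emeasure (bvn sx sy rho) {p. e < d1 * fst p + d2 * snd p}
      = (\<integral>\<^sup>+p. ennreal (bvn_density sx sy rho p) * indicator {p. e < d1 * fst p + d2 * snd p} p \<partial>lborel)"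
    unfolding bvn_def by (rule emeasure_density) measurable
  also have "\<dots> = (\<integral>\<^sup>+p. ennreal (bvn_density sx sy rho p * ?I (d1 * fst p + d2 * snd p)) \<partial>(lborel \<Otimes>\<^sub>M lborel))"
    by (subst lborel_prod) (auto intro!: nn_integral_cong simp: ennreal_mult indicator_def)
  also have "\<dots> = (\<integral>\<^sup>+x. \<integral>\<^sup>+y. ennreal (bvn_density sx sy rho (x,y) * ?I (d1 * x + d2 * y)) \<partial>lborel \<partial>lborel)"
  proof -
    have m: "(\<lambda>p. ennreal (bvn_density sx sy rho p * ?I (d1 * fst p + d2 * snd p))) \<in> borel_measurable (lborel \<Otimes>\<^sub>M lborel)"
      unfolding lborel_prod by measurable
    show ?thesis using sigma_finite_measure.nn_integral_fst[OF sigma_finite_lborel m] by simp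
  qed
  also have "\<dots> = (\<integral>\<^sup>+x. \<integral>\<^sup>+y. ennreal (N t (y - k * x) * (N sx x * ?I (d1 * x + d2 * y))) \<partial>lborel \<partial>lborel)"
    by (simp add: bvn_factor[OF sx sy r] t_def k_def ac_simps)
  also have "\<dots> = (\<integral>\<^sup>+x. \<integral>\<^sup>+w. ennreal (N t w * (N sx x * ?I (d1 * x + d2 * (k * x + w)))) \<partial>lborel \<partial>lborel)"
    apply (rule nn_integral_cong)
    subgoal for x
    proof -
      have [measurable]: "(\<lambda>w. N t w * (N sx x * ?I (d1 * x + d2 * w))) \<in> borel_measurable borel"
        by measurable
      show ?thesis by (subst sub_shift[where y="k*x"]) (simp_all add: algebra_simps)
    qed
    done
  also have "\<dots> = (\<integral>\<^sup>+x. \<integral>\<^sup>+w. ennreal (N sx x * N t w * ?I ((d1 + d2 * k) * x + d2 * w)) \<partial>lborel \<partial>lborel)"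
    by (simp add: algebra_simps)
  also have "\<dots> = (\<integral>\<^sup>+z. ennreal (N (sqrt ((d1 + d2 * k)\<^sup>2 * sx\<^sup>2 + d2\<^sup>2 * t\<^sup>2)) z * ?I z) \<partial>lborel)"
    by (rule twoD_gen[OF sx t]) (use d in auto)
  also have "(d1 + d2 * k)\<^sup>2 * sx\<^sup>2 + d2\<^sup>2 * t\<^sup>2 = d1\<^sup>2 * sx\<^sup>2 + 2 * rho * d1 * d2 * sx * sy + d2\<^sup>2 * sy\<^sup>2"
    using sx r2 unfolding t_def k_def
    by (simp add: power_mult_distrib power2_eq_square field_simps)
  finally show ?thesis .
qed

definition E :: "real \<Rightarrow> ennreal" where
  "E u = (\<integral>\<^sup>+z. ennreal (N 1 z * indicator {u<..} z) \<partial>lborel)"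

definition Qn :: "real \<Rightarrow> real" where "Qn u = enn2real (E u)"

lemma E_neg: "E (-u) = (\<integral>\<^sup>+z. ennreal (N 1 z * indicator {..<u} z) \<partial>lborel)"
proof -
  have "(\<integral>\<^sup>+x. ennreal (N 1 x * indicator {-u<..} (-1 * x)) \<partial>lborel)
     = (\<integral>\<^sup>+z. ennreal (N (\<bar>-1\<bar> * 1) z * indicator {-u<..} z) \<partial>lborel)"
    by (rule sub1) auto
  moreover have "\<And>x. indicator {-u<..} (-1 * x) = (indicator {..<u} x :: real)"
    by (auto simp: indicator_def)
  ultimately show ?thesis unfolding E_def by simp
qed

lemma E_sum: "E u + E (-u) = 1"
proof -
  have "E u + E (-u) = (\<integral>\<^sup>+z. ennreal (N 1 z * indicator {u<..} z) + ennreal (N 1 z * indicator {..<u} z) \<partial>lborel)"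
    unfolding E_neg unfolding E_def by (rule nn_integral_add[symmetric]) auto
  also have "\<dots> = (\<integral>\<^sup>+z. ennreal (N 1 z) \<partial>lborel)"
  proof (rule nn_integral_cong_AE)
    show "AE z in lborel. ennreal (N 1 z * indicator {u<..} z) + ennreal (N 1 z * indicator {..<u} z) = ennreal (N 1 z)"
      using AE_lborel_singleton[of u] by eventually_elim (auto simp: indicator_def)
  qed
  also have "\<dots> = 1" by (rule N_total) simp
  finally show ?thesis .
qed

lemma E_fin: "E u < \<top>"
proof -
  have "E u \<le> E u + E (-u)" by simp
  then show ?thesis using E_sum by (metis ennreal_one_less_top order_le_less_trans)
qed

lemma Qn_sum: "Qn u + Qn (-u) = 1"
  unfolding Qn_def using E_sum[of u] E_fin[of u] E_fin[of "-u"]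
  by (metis enn2real_1 enn2real_plus less_top)

lemma Qn_nonneg: "Qn u \<ge> 0" unfolding Qn_def by simp

lemma Qn_le1: "Qn u \<le> 1" using Qn_sum[of u] Qn_nonneg[of "-u"] by linarith

lemma Qn0: "Qn 0 = 1/2" using Qn_sum[of 0] by simp

lemma E_split:
  assumes u: "u \<ge> 0"
  shows "E 0 = ennreal (integral {0..u} (N 1)) + E u"
proof -
  have int: "(N 1 has_integral integral {0..u} (N 1)) {0..u}"
    by (intro integrable_integral integrable_continuous_real) (auto simp: normal_density_def intro!: continuous_intros)
  have "E 0 = (\<integral>\<^sup>+z. ennreal (N 1 z) * indicator {0..u} z + ennreal (N 1 z * indicator {u<..} z) \<partial>lborel)"
    unfolding E_def
  proof (rule nn_integral_cong_AE)
    show "AE z in lborel. ennreal (N 1 z * indicator {0<..} z) = ennreal (N 1 z) * indicator {0..u} z + ennreal (N 1 z * indicator {u<..} z)"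
      using AE_lborel_singleton[of 0] by eventually_elim (use u in \<open>auto simp: indicator_def\<close>)
  qed
  also have "\<dots> = (\<integral>\<^sup>+z. ennreal (N 1 z) * indicator {0..u} z \<partial>lborel) + E u"
    unfolding E_def by (rule nn_integral_add) auto
  also have "(\<integral>\<^sup>+z. ennreal (N 1 z) * indicator {0..u} z \<partial>lborel) = ennreal (integral {0..u} (N 1))"
    by (rule nn_integral_has_integral_lebesgue'[OF _ int]) simp
  finally show ?thesis .
qed

lemma Qn_eq:
  assumes u: "u \<ge> 0"
  shows "Qn u = 1/2 - integral {0..u} (N 1)"
proof -
  have "integral {0..u} (N 1) \<ge> 0" by (rule integral_nonneg) (auto intro!: integrable_continuous_real continuous_intros simp: normal_density_def)
  then have "Qn 0 = integral {0..u} (N 1) + Qn u"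
    unfolding Qn_def using E_split[OF u] E_fin[of u] by (simp add: enn2real_plus)
  then show ?thesis using Qn0 by simp
qed

lemma mills:
  assumes u: "u > 0"
  shows "u * Qn u \<le> N 1 u"
proof -
  have der: "DERIV (\<lambda>z. - N 1 z) z :> z * N 1 z" for z
    unfolding normal_density_def
    by (auto intro!: derivative_eq_intros simp: field_simps power2_eq_square)
  have lim: "((\<lambda>z. - N 1 z) \<longlongrightarrow> 0) at_top"
    unfolding normal_density_def by real_asymp
  have "(\<integral>\<^sup>+z. ennreal (z * N 1 z) * indicator {u..} z \<partial>lborel) = ennreal (0 - (- N 1 u))"
    by (rule nn_integral_FTC_atLeast[OF _ der _ lim]) (use u in auto)
  moreover have "ennreal u * E u \<le> (\<integral>\<^sup>+z. ennreal (z * N 1 z) * indicator {u..} z \<partial>lborel)"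
    unfolding E_def
    apply (subst nn_integral_cmult[symmetric], simp)
    apply (rule nn_integral_mono)
    using u by (auto simp: indicator_def ennreal_mult[symmetric] intro!: ennreal_leI mult_right_mono)
  ultimately have "ennreal u * E u \<le> ennreal (N 1 u)" by simp
  then have "enn2real (ennreal u * E u) \<le> N 1 u"
    using enn2real_mono[of "ennreal u * E u" "ennreal (N 1 u)"] by simp
  then show ?thesis unfolding Qn_def using u by (simp add: enn2real_mult)
qed

definition Phi :: "real \<Rightarrow> real" where "Phi x = integral {-1..x} (N 1)"

lemma contN: "continuous_on S (N 1)"
  unfolding normal_density_def by (auto intro!: continuous_intros)

lemma N1_pos: "N 1 x > 0" by (rule normal_density_pos) simp

lemma DERIV_N1: "DERIV (N 1) t :> - t * N 1 t"
  unfolding normal_density_def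
  by (auto intro!: derivative_eq_intros simp: field_simps power2_eq_square)

lemma DERIV_Phi: assumes "t > -1" shows "DERIV Phi t :> N 1 t"
proof -
  have "(Phi has_real_derivative N 1 t) (at t within {-1..t+1})"
    unfolding Phi_def by (rule integral_has_real_derivative[OF contN]) (use assms in auto)
  moreover have "at t within {-1..t+1} = at t" by (rule at_within_Icc_at) (use assms in auto)
  ultimately show ?thesis by simp
qed

definition G :: "real \<Rightarrow> real" where "G t = 1/2 - Phi t + Phi 0"

lemma Qn_G: assumes "u \<ge> 0" shows "Qn u = G u"
proof -
  have "integral {-1..0} (N 1) + integral {0..u} (N 1) = integral {-1..u} (N 1)"
    using Henstock_Kurzweil_Integration.integral_combine[where a="-1" and c=0 and b=u and f="N 1"] assms integrable_continuous_real[OF contN[of "{-1..u}"]] by simp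
  then show ?thesis unfolding G_def Phi_def Qn_eq[OF assms] by simp
qed

lemma DERIV_G: assumes "t > -1" shows "DERIV G t :> - N 1 t"
  unfolding G_def using DERIV_Phi[OF assms] by (auto intro!: derivative_eq_intros)

lemma sqrt_pi2: "sqrt (pi/2) * N 1 0 = 1/2"
proof -
  have s4: "sqrt (2*pi) = sqrt 2 * sqrt pi" by (simp add: real_sqrt_mult)
  have "sqrt (pi/2) * N 1 0 = sqrt (pi/2) / sqrt (2*pi)" by (simp add: normal_density_def std_normal_density_def)
  also have "\<dots> = sqrt ((pi/2) / (2*pi))" by (simp only: real_sqrt_divide)
  also have "(pi/2) / (2*pi) = (1/2)\<^sup>2" by (simp add: power2_eq_square)
  finally show ?thesis by simp
qed

lemma sqrt_pi2_bounds: "1 < sqrt (pi/2)" "sqrt (pi/2) < 3/2"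
proof -
  show "1 < sqrt (pi/2)" using pi_gt3 by (simp add: real_less_rsqrt)
  have "pi/2 < (3/2)\<^sup>2" using pi_less_4 by (simp add: power2_eq_square)
  then have "sqrt (pi/2) < sqrt ((3/2)\<^sup>2)" by (simp only: real_sqrt_less_iff)
  then show "sqrt (pi/2) < 3/2" by simp
qed

lemma psi_pos:
  assumes u: "u > 0"
  shows "Qn u < (sqrt (pi/2) + u) * N 1 u"
proof (cases "u \<ge> 3/4")
  case True
  have "u * Qn u \<le> N 1 u" by (rule mills[OF u])
  then have "Qn u \<le> N 1 u / u" using u by (simp add: field_simps)
  also have "\<dots> \<le> (4/3) * N 1 u" using True N1_pos[of u] by (simp add: field_simps)
  also have "\<dots> < (sqrt (pi/2) + u) * N 1 u"
    using True sqrt_pi2_bounds(1) N1_pos[of u] by (intro mult_strict_right_mono) linarith+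
  finally show ?thesis .
next
  case False
  define Psi where "Psi t = (sqrt (pi/2) + t) * N 1 t - G t" for t
  have "Psi 0 < Psi u"
  proof (rule DERIV_pos_imp_increasing[OF u])
    fix t assume t: "0 \<le> t" "t \<le> u"
    have "DERIV Psi t :> 1 * N 1 t + (sqrt (pi/2) + t) * (- t * N 1 t) - (- N 1 t)"
    proof -
      have d1: "DERIV (\<lambda>z. sqrt (pi/2) + z) t :> 1" by (auto intro!: derivative_eq_intros)
      note d3 = DERIV_diff[OF DERIV_mult[OF d1 DERIV_N1] DERIV_G[of t]]
      show ?thesis unfolding Psi_def using d3 t by (simp add: algebra_simps)
    qed
    moreover have "1 * N 1 t + (sqrt (pi/2) + t) * (- t * N 1 t) - (- N 1 t) = N 1 t * (2 - t * sqrt (pi/2) - t\<^sup>2)"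
      by (simp add: algebra_simps power2_eq_square)
    moreover have "2 - t * sqrt (pi/2) - t\<^sup>2 > 0"
    proof -
      have "t * sqrt (pi/2) \<le> (3/4) * (3/2)"
        using t False sqrt_pi2_bounds by (intro mult_mono) auto
      moreover have "t\<^sup>2 \<le> (3/4)\<^sup>2" using t False by (intro power_mono) auto
      ultimately show ?thesis by (simp add: power2_eq_square)
    qed
    ultimately show "\<exists>y. DERIV Psi t :> y \<and> y > 0" using N1_pos[of t] by auto
  qed
  moreover have "Psi 0 = 0" unfolding Psi_def G_def using sqrt_pi2 by simp
  ultimately show ?thesis unfolding Psi_def using Qn_G[of u] u by simp
qed

lemma h_lt:
  assumes u: "u > 0"
  shows "(sqrt pi + sqrt 2 * u) * Qn u < sqrt pi / 2"
proof -
  define H where "H t = (sqrt pi + sqrt 2 * t) * G t" for t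
  have sp: "sqrt pi = sqrt 2 * sqrt (pi/2)" by (simp add: real_sqrt_divide)
  have der: "DERIV H t :> sqrt 2 * (G t - (sqrt (pi/2) + t) * N 1 t)" if "t > -1" for t
  proof -
    have "DERIV H t :> (0 + sqrt 2 * 1) * G t + (sqrt pi + sqrt 2 * t) * (- N 1 t)"
    proof -
      have d1: "DERIV (\<lambda>z. sqrt pi + sqrt 2 * z) t :> 0 + sqrt 2 * 1" by (auto intro!: derivative_eq_intros)
      show ?thesis unfolding H_def using DERIV_mult[OF d1 DERIV_G[OF that]] by (simp add: algebra_simps)
    qed
    then show ?thesis by (simp add: sp algebra_simps)
  qed
  have "H 0 > H u"
  proof (rule DERIV_neg_imp_decreasing_open[OF u])
    fix t assume t: "0 < t" "t < u"
    have "G t - (sqrt (pi/2) + t) * N 1 t < 0" using psi_pos[OF t(1)] Qn_G[of t] t by simp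
    then show "\<exists>y. DERIV H t :> y \<and> y < 0" using der[of t] t by (intro exI[of _ "sqrt 2 * (G t - (sqrt (pi/2) + t) * N 1 t)"]) (auto simp: mult_pos_neg)
  next
    show "continuous_on {0..u} H"
      using der by (intro continuous_at_imp_continuous_on ballI DERIV_isCont) force
  qed
  moreover have "H 0 = sqrt pi / 2" unfolding H_def G_def by simp
  ultimately have "H u < sqrt pi / 2" by simp
  then show ?thesis unfolding H_def using Qn_G[of u] u by simp
qed

lemma sqrt_gt_self: "c < sqrt (c\<^sup>2 + 1)"
proof -
  have "\<bar>c\<bar> = sqrt (c\<^sup>2)" by simp
  also have "\<dots> < sqrt (c\<^sup>2 + 1)" by (simp only: real_sqrt_less_iff)
  finally show ?thesis by linarith
qed

lemma thetaM_eq: "thetaM sx sy rho = pi + arctan (cpar sx sy rho - sqrt ((cpar sx sy rho)\<^sup>2 + 1))"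
proof -
  define c where "c = cpar sx sy rho"
  define t0 where "t0 = c - sqrt (c\<^sup>2 + 1)"
  have t0: "t0 < 0" using sqrt_gt_self[of c] by (simp add: t0_def)
  have a: "arctan t0 < 0" "- (pi/2) < arctan t0" using t0 arctan_bounded[of t0] by auto
  show ?thesis
    unfolding thetaM_def c_def[symmetric] t0_def[symmetric]
  proof (rule the_equality)
    show "pi / 2 < pi + arctan t0 \<and> pi + arctan t0 < pi \<and> tan (pi + arctan t0) = t0"
      using a by (simp add: add.commute[of pi] tan_arctan)
  next
    fix t assume t: "pi / 2 < t \<and> t < pi \<and> tan t = t0"
    have "tan (t - pi) = tan t" using tan_periodic_pi[of "t - pi"] by simp
    then have "arctan t0 = t - pi" using t arctan_tan[of "t - pi"] by auto
    then show "t = pi + arctan t0" by simp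
  qed
qed

lemma geom:
  assumes sx: "sx > 0" and sy: "sy > 0" and rho: "0 < rho" and sxy: "sx < sy" and r: "r > 0"
    and th1: "thetaM sx sy rho \<le> theta" and th2: "theta \<le> 5 * pi / 4"
    and d1: "d1 = r * cos theta" and d2: "d2 = r * sin theta"
  shows "d1\<^sup>2 * sx\<^sup>2 + 2 * rho * d1 * d2 * sx * sy + d2\<^sup>2 * sy\<^sup>2
       \<le> (sx\<^sup>2 + 2 * rho * sx * sy + sy\<^sup>2) / 2 * (d1\<^sup>2 + d2\<^sup>2)"
proof -
  define c where "c = cpar sx sy rho"
  define w where "w = sqrt (c\<^sup>2 + 1)"
  define t0 where "t0 = c - w"
  define B where "B = (sx\<^sup>2 - sy\<^sup>2) / 2"
  define C where "C = rho * sx * sy"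
  have C: "C > 0" using rho sx sy by (simp add: C_def)
  have B: "B < 0" using sxy sx by (simp add: B_def power_strict_mono)
  have cBC: "c = - B / C"
  proof -
    have "C \<noteq> 0" using C by simp
    then have "rho * sx * sy \<noteq> 0" by (simp add: C_def)
    then show ?thesis unfolding c_def cpar_def B_def C_def by (simp add: divide_simps)
  qed
  have w: "w > c" "w > 0" using sqrt_gt_self[of c] by (auto simp: w_def intro!: add_nonneg_pos)
  have w2: "w\<^sup>2 = c\<^sup>2 + 1" by (simp add: w_def)
  have t0: "t0 < 0" using w by (simp add: t0_def)
  define al where "al = arctan t0"
  have thM: "thetaM sx sy rho = pi + al" unfolding thetaM_eq al_def t0_def w_def c_def ..
  define ph where "ph = theta - pi"
  have ph1: "al \<le> ph" and ph2: "ph \<le> pi/4" using th1 th2 thM by (auto simp: ph_def)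
  have al: "- (pi/2) < al" "al < 0" using arctan_bounded[of t0] t0 by (auto simp: al_def)
  have cph: "cos ph > 0" using ph1 ph2 al by (intro cos_gt_zero_pi) auto
  define T where "T = tan ph"
  have T1: "T \<le> 1" unfolding T_def tan_45[symmetric] using ph1 ph2 al by (intro tan_mono_le) auto
  have T0: "t0 \<le> T" unfolding T_def using tan_mono_le[of al ph] ph1 ph2 al by (simp add: al_def tan_arctan)
  have costh: "cos theta = - cos ph" and sinth: "sin theta = - sin ph"
    unfolding ph_def by (simp_all add: cos_diff sin_diff)
  have sinph: "sin ph = cos ph * T" unfolding T_def tan_def using cph by simp
  define k where "k = r * cos ph"
  have k: "k > 0" using r cph by (simp add: k_def)
  have dd1: "d1 = - k" and dd2: "d2 = - k * T" using d1 d2 costh sinth sinph by (simp_all add: k_def)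
  have Lt0: "(B - C) + (B + C) * t0 \<le> 0"
  proof -
    have "(B - C) + (B + C) * t0 = C * ((-c - 1) + (1 - c) * t0)"
      using C by (simp add: cBC field_simps)
    also have "(-c - 1) + (1 - c) * t0 = - w * (w + 1 - c)"
      unfolding t0_def using w2 by (simp add: algebra_simps power2_eq_square)
    also have "\<dots> < 0" using w by (simp add: mult_pos_pos)
    finally show ?thesis using C by (simp add: mult_pos_neg)
  qed
  have LT: "(B - C) + (B + C) * T \<le> 0"
  proof (cases "B + C \<ge> 0")
    case True
    then have "(B + C) * T \<le> (B + C) * 1" using T1 by (intro mult_left_mono) auto
    then show ?thesis using B by simp
  next
    case False
    then have "(B + C) * T \<le> (B + C) * t0" using T0 by (intro mult_left_mono_neg) auto
    then show ?thesis using Lt0 by simp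
  qed
  have "d1\<^sup>2 * sx\<^sup>2 + 2 * rho * d1 * d2 * sx * sy + d2\<^sup>2 * sy\<^sup>2
       - (sx\<^sup>2 + 2 * rho * sx * sy + sy\<^sup>2) / 2 * (d1\<^sup>2 + d2\<^sup>2)
       = (d1 - d2) * ((B - C) * d1 + (B + C) * d2)"
    unfolding B_def C_def by (simp add: algebra_simps power2_eq_square field_simps)
  also have "\<dots> = (k * k) * ((1 - T) * ((B - C) + (B + C) * T))"
    unfolding dd1 dd2 by (simp add: algebra_simps)
  also have "\<dots> \<le> 0"
    using k T1 LT by (intro mult_nonneg_nonpos mult_nonneg_nonpos) auto
  finally show ?thesis by simp
qed

lemma final_ineq:
  fixes s V D m q e :: real
  assumes V: "V > 0" and s: "s = sqrt (2 * pi * V) / 4" and D: "D > 0"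
    and m2: "m\<^sup>2 \<le> 2 * D" and q: "q \<le> V / 2 * D" and q0: "q > 0"
    and e: "e = D / 2 - s * m" and e0: "e > 0"
  shows "2 * s - m * Qn (e / sqrt q) > 0"
proof (cases "m \<le> 0")
  case True
  have "s > 0" using V by (simp add: s)
  then show ?thesis using True Qn_nonneg[of "e / sqrt q"] by (smt (verit) mult_nonpos_nonneg)
next
  case False
  then have m: "m > 0" by simp
  define R where "R = sqrt D"
  define u where "u = e / sqrt q"
  have R: "R > 0" using D by (simp add: R_def)
  have R2: "R\<^sup>2 = D" using D by (simp add: R_def)
  have sV: "sqrt V > 0" using V by simp
  have s2: "sqrt 2 > 0" by simp
  have spi: "sqrt pi > 0" by simp
  have sdef: "s = sqrt 2 * sqrt pi * sqrt V / 4" unfolding s by (simp add: real_sqrt_mult)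
  have sp: "s > 0" unfolding sdef using sV spi s2 by (intro divide_pos_pos mult_pos_pos) auto
  have mR: "m \<le> sqrt 2 * R"
  proof -
    have "sqrt (m\<^sup>2) \<le> sqrt (2 * D)" using m2 by (simp only: real_sqrt_le_iff)
    then show ?thesis using m D by (simp add: R_def real_sqrt_mult)
  qed
  have SR: "sqrt q \<le> sqrt V / sqrt 2 * R"
  proof -
    have "sqrt q \<le> sqrt (V / 2 * D)" using q by (simp only: real_sqrt_le_iff)
    also have "\<dots> = sqrt V / sqrt 2 * R" by (simp add: R_def real_sqrt_mult real_sqrt_divide)
    finally show ?thesis .
  qed
  have sq: "sqrt q > 0" using q0 by simp
  have u: "u \<ge> e / (sqrt V / sqrt 2 * R)"
    unfolding u_def using e0 sq SR by (intro divide_left_mono) (use sV R in auto)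
  have u0: "u > 0" unfolding u_def using e0 sq by simp
  have step1: "m * R \<le> 2 * sqrt 2 * e + 4 * s * R"
  proof -
    have "m * (R + 2 * sqrt 2 * s) \<le> sqrt 2 * R * (R + 2 * sqrt 2 * s)"
      using mR R sp by (intro mult_right_mono) auto
    moreover have "sqrt 2 * R * (R + 2 * sqrt 2 * s) = sqrt 2 * R\<^sup>2 + 4 * s * R"
      by (simp add: algebra_simps power2_eq_square)
    moreover have "sqrt 2 * R\<^sup>2 = 2 * sqrt 2 * e + 2 * sqrt 2 * s * m"
    proof -
      have "R\<^sup>2 = 2 * e + 2 * s * m" using R2 e by simp
      then have "sqrt 2 * R\<^sup>2 = sqrt 2 * (2 * e + 2 * s * m)" by simp
      then show ?thesis by (simp add: algebra_simps)
    qed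
    ultimately have "m * (R + 2 * sqrt 2 * s) \<le> 2 * sqrt 2 * e + 2 * sqrt 2 * s * m + 4 * s * R" by linarith
    then show ?thesis by (simp add: algebra_simps)
  qed
  have step2: "m \<le> 4 * s + 2 * sqrt V * u"
  proof -
    have "m \<le> 4 * s + 2 * sqrt 2 * e / R" using step1 R by (simp add: field_simps)
    also have "2 * sqrt 2 * e / R = 2 * sqrt V * (e / (sqrt V / sqrt 2 * R))"
      using sV R by (simp add: field_simps)
    also have "\<dots> \<le> 2 * sqrt V * u" by (rule mult_left_mono[OF u]) (use sV in simp)
    finally show ?thesis by simp
  qed
  have key: "4 * s + 2 * sqrt V * u = (4 * s / sqrt pi) * (sqrt pi + sqrt 2 * u)"
    unfolding sdef using spi by (simp add: field_simps)
  have "m * Qn u \<le> (4 * s + 2 * sqrt V * u) * Qn u"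
    using step2 Qn_nonneg[of u] by (intro mult_right_mono) auto
  also have "\<dots> = (4 * s / sqrt pi) * ((sqrt pi + sqrt 2 * u) * Qn u)" unfolding key by simp
  also have "\<dots> < (4 * s / sqrt pi) * (sqrt pi / 2)"
    using h_lt[OF u0] sp spi by (intro mult_strict_left_mono) auto
  also have "\<dots> = 2 * s" using spi by simp
  finally show ?thesis unfolding u_def by simp
qed

lemma qf_pos:
  fixes sx sy rho d1 d2 :: real
  assumes sx: "sx > 0" and sy: "sy > 0" and r: "\<bar>rho\<bar> < 1" and d: "d1 \<noteq> 0 \<or> d2 \<noteq> 0"
  shows "d1\<^sup>2 * sx\<^sup>2 + 2 * rho * d1 * d2 * sx * sy + d2\<^sup>2 * sy\<^sup>2 > 0"
proof -
  have r2: "1 - rho\<^sup>2 > 0" using r by (simp add: abs_square_less_1)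
  have eq: "d1\<^sup>2 * sx\<^sup>2 + 2 * rho * d1 * d2 * sx * sy + d2\<^sup>2 * sy\<^sup>2 = (d1 * sx + rho * d2 * sy)\<^sup>2 + (1 - rho\<^sup>2) * (d2 * sy)\<^sup>2"
    by (simp add: algebra_simps power2_eq_square)
  show ?thesis
  proof (cases "d2 = 0")
    case True
    then have "d1 \<noteq> 0" using d by simp
    then show ?thesis using True sx by simp
  next
    case False
    then have "(1 - rho\<^sup>2) * (d2 * sy)\<^sup>2 > 0" using r2 sy by simp
    then show ?thesis unfolding eq by (smt (verit) zero_le_power2)
  qed
qed

lemma bvn_Qn:
  assumes sx: "sx > 0" and sy: "sy > 0" and r: "\<bar>rho\<bar> < 1" and d: "d1 \<noteq> 0 \<or> d2 \<noteq> 0"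
  shows "measure (bvn sx sy rho) {p. e < d1 * fst p + d2 * snd p}
       = Qn (e / sqrt (d1\<^sup>2 * sx\<^sup>2 + 2 * rho * d1 * d2 * sx * sy + d2\<^sup>2 * sy\<^sup>2))"
proof -
  define S where "S = sqrt (d1\<^sup>2 * sx\<^sup>2 + 2 * rho * d1 * d2 * sx * sy + d2\<^sup>2 * sy\<^sup>2)"
  have S: "S > 0" unfolding S_def using qf_pos[OF assms] by simp
  have "emeasure (bvn sx sy rho) {p. e < d1 * fst p + d2 * snd p}
      = (\<integral>\<^sup>+z. ennreal (N S z * indicator {e<..} z) \<partial>lborel)"
    unfolding S_def by (rule bvn_half[OF assms])
  also have "\<dots> = (\<integral>\<^sup>+x. ennreal (N 1 x * indicator {e<..} (S * x)) \<partial>lborel)"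
    using sub1[of S 1 "indicator {e<..}"] S by simp
  also have "\<dots> = E (e / S)"
    unfolding E_def using S by (intro nn_integral_cong) (auto simp: indicator_def field_simps)
  finally show ?thesis unfolding measure_def Qn_def S_def by simp
qed

theorem mainTheorem13:
  fixes sx sy rho r theta x1 y1 :: real
  assumes "sx > 0" and "sy > 0" and "0 < rho" and "rho < 1" and "sx < sy"
    and "r > 0"
    and "thetaM sx sy rho \<le> theta" and "theta \<le> 5 * pi / 4"
    and "x1 = x2star sx sy rho + r * cos theta"
    and "y1 = x2star sx sy rho + r * sin theta"
    and "(x1, y1) \<noteq> astar sx sy rho"
    and "x1\<^sup>2 + y1\<^sup>2 > 2 * (x2star sx sy rho)\<^sup>2"
  shows "K sx sy rho (x1, y1) (bstar sx sy rho) > 0"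
proof -
  note sx = assms(1) and sy = assms(2) and rho = assms(3) assms(4)
  define s where "s = x2star sx sy rho"
  define V where "V = sx\<^sup>2 + 2 * rho * sx * sy + sy\<^sup>2"
  define d1 where "d1 = x1 - s"
  define d2 where "d2 = y1 - s"
  define D where "D = d1\<^sup>2 + d2\<^sup>2"
  define q where "q = d1\<^sup>2 * sx\<^sup>2 + 2 * rho * d1 * d2 * sx * sy + d2\<^sup>2 * sy\<^sup>2"
  define e where "e = (x1\<^sup>2 + y1\<^sup>2 - 2 * s\<^sup>2) / 2"
  define m where "m = - (d1 + d2)"
  have rabs: "\<bar>rho\<bar> < 1" using rho by simp
  have V: "V > 0" unfolding V_def using sx sy rho by (intro add_pos_pos) auto
  have sdef: "s = sqrt (2 * pi * V) / 4" unfolding s_def x2star_def V_def ..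
  have d1r: "d1 = r * cos theta" and d2r: "d2 = r * sin theta"
    using assms(9,10) by (simp_all add: d1_def d2_def s_def)
  have Dr: "D = r\<^sup>2" unfolding D_def d1r d2r by (simp add: power_mult_distrib algebra_simps flip: distrib_left)
  have D: "D > 0" using Dr assms(6) by simp
  have d: "d1 \<noteq> 0 \<or> d2 \<noteq> 0" using D by (auto simp: D_def)
  have ab: "(x1, y1) \<noteq> bstar sx sy rho" using d by (auto simp: bstar_def d1_def d2_def s_def)
  have C1: "C1 (x1, y1) (bstar sx sy rho) = {p. e < d1 * fst p + d2 * snd p}"
    unfolding C1_def bstar_def e_def d1_def d2_def s_def
    by (auto simp: algebra_simps power2_eq_square field_simps)
  have C2: "C2 (x1, y1) (bstar sx sy rho) = {p. - e < (- d1) * fst p + (- d2) * snd p}"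
    unfolding C2_def bstar_def e_def d1_def d2_def s_def
    by (auto simp: algebra_simps power2_eq_square field_simps)
  have P1: "measure (bvn sx sy rho) (C1 (x1, y1) (bstar sx sy rho)) = Qn (e / sqrt q)"
    unfolding C1 q_def by (rule bvn_Qn[OF sx sy rabs d])
  have P2: "measure (bvn sx sy rho) (C2 (x1, y1) (bstar sx sy rho)) = Qn (- (e / sqrt q))"
    unfolding C2 q_def using bvn_Qn[OF sx sy rabs, of "-d1" "-d2" "-e"] d by simp
  have Keq: "K sx sy rho (x1, y1) (bstar sx sy rho) = 2 * s - m * Qn (e / sqrt q)"
  proof -
    have Qm: "Qn (- (e / sqrt q)) = 1 - Qn (e / sqrt q)" using Qn_sum[of "e / sqrt q"] by linarith
    have "K sx sy rho (x1, y1) (bstar sx sy rho)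
       = (x1 + y1) * measure (bvn sx sy rho) (C1 (x1, y1) (bstar sx sy rho))
         + (s + s) * measure (bvn sx sy rho) (C2 (x1, y1) (bstar sx sy rho))"
      unfolding K_def using ab by (auto simp: bstar_def s_def)
    also have "\<dots> = (x1 + y1) * Qn (e / sqrt q) + (s + s) * (1 - Qn (e / sqrt q))"
      unfolding P1 P2 Qm ..
    also have "\<dots> = 2 * s - m * Qn (e / sqrt q)"
      unfolding m_def d1_def d2_def by (simp add: algebra_simps)
    finally show ?thesis .
  qed
  have m2: "m\<^sup>2 \<le> 2 * D"
    unfolding m_def D_def using zero_le_power2[of "d1 - d2"] by (simp add: power2_eq_square algebra_simps)
  have qle: "q \<le> V / 2 * D"
    unfolding q_def V_def D_def
    by (rule geom[OF sx sy rho(1) assms(5) assms(6) assms(7) assms(8) d1r d2r])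
  have q0: "q > 0" unfolding q_def by (rule qf_pos[OF sx sy rabs d])
  have eeq: "e = D / 2 - s * m"
    unfolding e_def D_def m_def d1_def d2_def by (simp add: power2_eq_square field_simps)
  have e0: "e > 0" unfolding e_def using assms(12) by (simp add: s_def)
  show ?thesis unfolding Keq by (rule final_ineq[OF V sdef D m2 qle q0 eeq e0])
qed

end
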